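(* Let $k\ge2$, let $f:(k+1)^V\to\mathbb{R}_{\ge0}$ be non-negative, monotone and $k$-submodular with multilinear extension $F$, let $OPT=\max_{S\in(k+1)^V}f(S)$, and let $c>0$. Consider the meta-framework with step $\delta=1/N$, and suppose that at every iteration $t$ the direction $v(t)$ satisfies, with $y=\nabla F(s(t))$: for every $a\in\mathbb{R}^{n\times k}$ with $0\le a_{i,j}\le y_{i,j}$ for all $i,j$, and every map $j^*:[n]\to[k]$, $$\sum_{i\in[n]}\sum_{j\in[k]}v_{i,j}(t)\big(a_{i,j^*(i)}-a_{i,j}\big)\ \le\ c\sum_{i\in[n]}\sum_{j\in[k]}v_{i,j}(t)\,y_{i,j}.$$ Then for every $\varepsilon>0$ there is $N_0$ such that for all $N\ge N_0$ the output satisfies $F(s(N))\ge\frac{1}{c+1}OPT-\varepsilon$.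
   Context: Let $V=[n]=\{1,\dots,n\}$ and let $k\ge 1$ be an integer. Write $(k+1)^V$ for the set of $k$-tuples $S=(S_1,\dots,S_k)$ of pairwise disjoint subsets of $V$. For $S,T\in(k+1)^V$ let $S\sqcap T=(S_1\cap T_1,\dots,S_k\cap T_k)$ and let $S\sqcup T$ be the tuple whose $j$-th component is $(S_j\cup T_j)\setminus\bigcup_{l\neq j}(S_l\cup T_l)$. A function $f:(k+1)^V\to\mathbb{R}$ is $k$-submodular if $f(S)+f(T)\ge f(S\sqcap T)+f(S\sqcup T)$ for all $S,T\in(k+1)^V$. Write $S\preceq T$ if $S_j\subseteq T_j$ for all $j$; $f$ is monotone if $S\preceq T$ implies $f(S)\le f(T)$. Let $\mathcal P=\{x\in[0,1]^{n\times k}:\sum_{j=1}^k x_{i,j}\le 1\ \forall i\in[n]\}$. The multilinear extension of $f$ is the polynomial $F(x)=\sum_{S\in(k+1)^V} f(S_1,\dots,S_k)\Big(\prod_{j\in[k]}\prod_{i\in S_j}x_{i,j}\Big)\prod_{i\in V\setminus\bigcup_j S_j}\Big(1-\sum_{j=1}^k x_{i,j}\Big)$, considered on $\mathcal P$. Meta-framework: fix a positive integer $N$ and $\delta=1/N$. Set $s(0)=0\in\mathbb{R}^{n\times k}$. For $t=0,1,\dots,N-1$, choose a direction $v(t)\in[0,1]^{n\times k}$ with $\sum_{j=1}^k v_{i,j}(t)=1$ for every $i\in[n]$ (the choice may depend on $s(t)$ and on $F$), and set $s(t+1)=s(t)+\delta\,v(t)$. The output is $s(N)$. *)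

theory Defs
  imports "HOL-Analysis.Analysis"
begin

text \<open>A k-tuple (S_1,...,S_k) of pairwise disjoint subsets of V = {1..n} is represented
  as a function S :: nat => nat set with S j the j-th component for j in {1..k},
  and S j = {} for j outside {1..k}.\<close>

definition ktuples :: "nat \<Rightarrow> nat \<Rightarrow> (nat \<Rightarrow> nat set) set" where
  "ktuples n k = {S. (\<forall>j\<in>{1..k}. S j \<subseteq> {1..n}) \<and> (\<forall>j. j \<notin> {1..k} \<longrightarrow> S j = {})
      \<and> (\<forall>j\<in>{1..k}. \<forall>l\<in>{1..k}. j \<noteq> l \<longrightarrow> S j \<inter> S l = {})}"

definition kmeet :: "(nat \<Rightarrow> nat set) \<Rightarrow> (nat \<Rightarrow> nat set) \<Rightarrow> (nat \<Rightarrow> nat set)" where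
  "kmeet S T = (\<lambda>j. S j \<inter> T j)"

definition kjoin :: "nat \<Rightarrow> (nat \<Rightarrow> nat set) \<Rightarrow> (nat \<Rightarrow> nat set) \<Rightarrow> (nat \<Rightarrow> nat set)" where
  "kjoin k S T = (\<lambda>j. if j \<in> {1..k} then (S j \<union> T j) - (\<Union>l\<in>{1..k} - {j}. S l \<union> T l) else {})"

definition k_submodular :: "nat \<Rightarrow> nat \<Rightarrow> ((nat \<Rightarrow> nat set) \<Rightarrow> real) \<Rightarrow> bool" where
  "k_submodular n k f \<longleftrightarrow> (\<forall>S\<in>ktuples n k. \<forall>T\<in>ktuples n k.
      f S + f T \<ge> f (kmeet S T) + f (kjoin k S T))"

definition kpreceq :: "nat \<Rightarrow> (nat \<Rightarrow> nat set) \<Rightarrow> (nat \<Rightarrow> nat set) \<Rightarrow> bool" where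
  "kpreceq k S T \<longleftrightarrow> (\<forall>j\<in>{1..k}. S j \<subseteq> T j)"

definition k_monotone :: "nat \<Rightarrow> nat \<Rightarrow> ((nat \<Rightarrow> nat set) \<Rightarrow> real) \<Rightarrow> bool" where
  "k_monotone n k f \<longleftrightarrow> (\<forall>S\<in>ktuples n k. \<forall>T\<in>ktuples n k. kpreceq k S T \<longrightarrow> f S \<le> f T)"

text \<open>Points of R^{n x k} are functions x :: nat => nat => real, x i j for i in [n], j in [k].\<close>

definition multilinear_ext :: "nat \<Rightarrow> nat \<Rightarrow> ((nat \<Rightarrow> nat set) \<Rightarrow> real) \<Rightarrow> (nat \<Rightarrow> nat \<Rightarrow> real) \<Rightarrow> real" where
  "multilinear_ext n k f x = (\<Sum>S\<in>ktuples n k. f S * (\<Prod>j\<in>{1..k}. \<Prod>i\<in>S j. x i j)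
      * (\<Prod>i\<in>{1..n} - (\<Union>j\<in>{1..k}. S j). 1 - (\<Sum>j=1..k. x i j)))"

definition partial_ij :: "((nat \<Rightarrow> nat \<Rightarrow> real) \<Rightarrow> real) \<Rightarrow> (nat \<Rightarrow> nat \<Rightarrow> real) \<Rightarrow> nat \<Rightarrow> nat \<Rightarrow> real" where
  "partial_ij F x i j = deriv (\<lambda>h. F (x(i := (x i)(j := h)))) (x i j)"

definition OPT :: "nat \<Rightarrow> nat \<Rightarrow> ((nat \<Rightarrow> nat set) \<Rightarrow> real) \<Rightarrow> real" where
  "OPT n k f = Max (f ` ktuples n k)"

text \<open>Trajectory of the meta-framework: s(0) = 0, s(t+1) = s(t) + (1/N) v(t).\<close>
definition traj :: "nat \<Rightarrow> (nat \<Rightarrow> nat \<Rightarrow> nat \<Rightarrow> real) \<Rightarrow> nat \<Rightarrow> nat \<Rightarrow> nat \<Rightarrow> real" where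
  "traj N v t = (\<lambda>i j. \<Sum>\<tau><t. (1 / real N) * v \<tau> i j)"

definition valid_direction :: "nat \<Rightarrow> nat \<Rightarrow> (nat \<Rightarrow> nat \<Rightarrow> real) \<Rightarrow> bool" where
  "valid_direction n k w \<longleftrightarrow> (\<forall>i\<in>{1..n}. (\<forall>j\<in>{1..k}. 0 \<le> w i j \<and> w i j \<le> 1)
      \<and> (\<Sum>j=1..k. w i j) = 1)"

definition c_condition :: "nat \<Rightarrow> nat \<Rightarrow> real \<Rightarrow> (nat \<Rightarrow> nat \<Rightarrow> real) \<Rightarrow> (nat \<Rightarrow> nat \<Rightarrow> real) \<Rightarrow> bool" where
  "c_condition n k c w y \<longleftrightarrow>
    (\<forall>a :: nat \<Rightarrow> nat \<Rightarrow> real. \<forall>jstar :: nat \<Rightarrow> nat.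
      (\<forall>i\<in>{1..n}. \<forall>j\<in>{1..k}. 0 \<le> a i j \<and> a i j \<le> y i j) \<longrightarrow>
      (\<forall>i\<in>{1..n}. jstar i \<in> {1..k}) \<longrightarrow>
      (\<Sum>i=1..n. \<Sum>j=1..k. w i j * (a i (jstar i) - a i j))
        \<le> c * (\<Sum>i=1..n. \<Sum>j=1..k. w i j * y i j))"

end

theory Submission
  imports Defs
begin


definition pp :: "nat \<Rightarrow> (nat \<Rightarrow> nat \<Rightarrow> real) \<Rightarrow> nat \<Rightarrow> nat \<Rightarrow> real" where
  "pp k x i j = (if j = 0 then 1 - (\<Sum>l=1..k. x i l) else x i j)"

definition Ex :: "nat \<Rightarrow> nat set \<Rightarrow> ((nat \<Rightarrow> nat) \<Rightarrow> real) \<Rightarrow> (nat \<Rightarrow> nat \<Rightarrow> real) \<Rightarrow> real" where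
  "Ex k B g x = (\<Sum>\<tau>\<in>Pi\<^sub>E B (\<lambda>_. {0..k}). g \<tau> * (\<Prod>i\<in>B. pp k x i (\<tau> i)))"

lemma Ex_empty: "Ex k {} g x = g (\<lambda>_. undefined)"
  by (simp add: Ex_def)

lemma Ex_insert:
  assumes "finite B" "a \<notin> B"
  shows "Ex k (insert a B) g x = (\<Sum>j\<in>{0..k}. pp k x a j * Ex k B (\<lambda>\<tau>. g (\<tau>(a:=j))) x)"
proof -
  have "Ex k (insert a B) g x = (\<Sum>p\<in>{0..k} \<times> Pi\<^sub>E B (\<lambda>_. {0..k}).
          g ((snd p)(a := fst p)) * (\<Prod>i\<in>insert a B. pp k x i (((snd p)(a := fst p)) i)))"
    unfolding Ex_def PiE_insert_eq
    by (subst sum.reindex[OF inj_combinator[OF assms(2)]]) (simp add: case_prod_beta)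
  also have "\<dots> = (\<Sum>p\<in>{0..k} \<times> Pi\<^sub>E B (\<lambda>_. {0..k}).
          pp k x a (fst p) * (g ((snd p)(a := fst p)) * (\<Prod>i\<in>B. pp k x i (snd p i))))"
  proof (rule sum.cong[OF refl])
    fix p assume "p \<in> {0..k} \<times> Pi\<^sub>E B (\<lambda>_. {0..k})"
    have "(\<Prod>i\<in>insert a B. pp k x i (((snd p)(a := fst p)) i)) = pp k x a (fst p) * (\<Prod>i\<in>B. pp k x i (((snd p)(a := fst p)) i))"
      using assms by (simp add: prod.insert)
    also have "(\<Prod>i\<in>B. pp k x i (((snd p)(a := fst p)) i)) = (\<Prod>i\<in>B. pp k x i (snd p i))"
      using assms(2) by (intro prod.cong) auto
    finally show "g ((snd p)(a := fst p)) * (\<Prod>i\<in>insert a B. pp k x i (((snd p)(a := fst p)) i)) =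
          pp k x a (fst p) * (g ((snd p)(a := fst p)) * (\<Prod>i\<in>B. pp k x i (snd p i)))" by simp
  qed
  also have "\<dots> = (\<Sum>j\<in>{0..k}. \<Sum>\<tau>\<in>Pi\<^sub>E B (\<lambda>_. {0..k}). pp k x a j * (g (\<tau>(a := j)) * (\<Prod>i\<in>B. pp k x i (\<tau> i))))"
    by (simp add: sum.cartesian_product')
  also have "\<dots> = (\<Sum>j\<in>{0..k}. pp k x a j * Ex k B (\<lambda>\<tau>. g (\<tau>(a:=j))) x)"
    by (simp add: Ex_def sum_distrib_left)
  finally show ?thesis .
qed

lemma Ex_cong:
  assumes "\<forall>i\<in>B. \<forall>j\<in>{1..k}. x i j = x' i j"
  shows "Ex k B g x = Ex k B g x'"
proof -
  have "\<And>i j. i \<in> B \<Longrightarrow> j \<in> {0..k} \<Longrightarrow> pp k x i j = pp k x' i j"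
    using assms by (auto simp: pp_def intro!: sum.cong)
  then show ?thesis unfolding Ex_def
    by (intro sum.cong refl arg_cong2[where f="(*)"] prod.cong) (auto simp: PiE_def Pi_def)
qed

lemma Ex_diff: "Ex k B (\<lambda>\<tau>. g1 \<tau> - g2 \<tau>) x = Ex k B g1 x - Ex k B g2 x"
  unfolding Ex_def by (simp add: sum_subtractf left_diff_distrib)

definition inP :: "nat \<Rightarrow> nat set \<Rightarrow> (nat \<Rightarrow> nat \<Rightarrow> real) \<Rightarrow> bool" where
  "inP k B x \<longleftrightarrow> (\<forall>i\<in>B. (\<forall>j\<in>{1..k}. 0 \<le> x i j) \<and> (\<Sum>j=1..k. x i j) \<le> 1)"

lemma pp_nonneg: "inP k B x \<Longrightarrow> i \<in> B \<Longrightarrow> j \<in> {0..k} \<Longrightarrow> 0 \<le> pp k x i j"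
  by (auto simp: inP_def pp_def)

lemma pp_sum: "(\<Sum>j\<in>{0..k}. pp k x i j) = 1"
proof -
  have "{0..k} = insert 0 {1..k}" by auto
  then show ?thesis by (simp add: pp_def)
qed

lemma W_nonneg: "inP k B x \<Longrightarrow> \<tau> \<in> Pi\<^sub>E B (\<lambda>_. {0..k}) \<Longrightarrow> 0 \<le> (\<Prod>i\<in>B. pp k x i (\<tau> i))"
  by (intro prod_nonneg) (auto intro: pp_nonneg)

lemma Ex_nonneg: "inP k B x \<Longrightarrow> (\<And>\<tau>. 0 \<le> g \<tau>) \<Longrightarrow> 0 \<le> Ex k B g x"
  unfolding Ex_def by (intro sum_nonneg mult_nonneg_nonneg W_nonneg) auto

lemma Ex_one: "finite B \<Longrightarrow> Ex k B (\<lambda>_. 1) x = 1"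
  by (induction B rule: finite_induct) (simp_all add: Ex_empty Ex_insert pp_sum)

lemma Ex_const: "Ex k B (\<lambda>_. c) x = c * Ex k B (\<lambda>_. 1) x"
  unfolding Ex_def by (simp add: sum_distrib_left)

lemma Ex_bound:
  assumes "finite B" "inP k B x" "\<And>\<tau>. \<bar>g \<tau>\<bar> \<le> M"
  shows "\<bar>Ex k B g x\<bar> \<le> M"
proof -
  have "0 \<le> Ex k B (\<lambda>\<tau>. M - g \<tau>) x" "0 \<le> Ex k B (\<lambda>\<tau>. M + g \<tau>) x"
    using assms(3) by (auto intro!: Ex_nonneg[OF assms(2)] simp: abs_le_iff) (smt (verit) assms(3))
  moreover have "Ex k B (\<lambda>\<tau>. M + g \<tau>) x = M + Ex k B g x"
    using Ex_diff[of k B "\<lambda>_. M" "\<lambda>\<tau>. - g \<tau>" x] Ex_const[of k B M x] Ex_one[OF assms(1)]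
      Ex_diff[of k B "\<lambda>_. 0" g x] Ex_const[of k B 0 x] by simp
  moreover have "Ex k B (\<lambda>\<tau>. M - g \<tau>) x = M - Ex k B g x"
    using Ex_diff[of k B "\<lambda>_. M" g x] Ex_const[of k B M x] Ex_one[OF assms(1)] by simp
  ultimately show ?thesis by linarith
qed

lemma psum_diff:
  "(\<Sum>j\<in>{0..k}. (pp k x' a j - pp k x a j) * h j) = (\<Sum>l=1..k. (x' a l - x a l) * (h l - h 0))"
proof -
  have e: "{0..k} = insert 0 {1..k}" by auto
  have s1: "(\<Sum>l=1..k. x a l - x' a l) = - (\<Sum>l=1..k. x' a l - x a l)"
    by (simp add: sum_negf[symmetric])
  have "(\<Sum>j\<in>{0..k}. (pp k x' a j - pp k x a j) * h j)
     = (\<Sum>l=1..k. x a l - x' a l) * h 0 + (\<Sum>l=1..k. (x' a l - x a l) * h l)"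
    unfolding e by (simp add: pp_def sum_subtractf)
  also have "\<dots> = (\<Sum>l=1..k. (x' a l - x a l) * h l) - (\<Sum>l=1..k. x' a l - x a l) * h 0"
    unfolding s1 by simp
  also have "\<dots> = (\<Sum>l=1..k. (x' a l - x a l) * (h l - h 0))"
    by (simp add: right_diff_distrib sum_subtractf sum_distrib_right[symmetric])
  finally show ?thesis .
qed

lemma inP_insert: "inP k (insert a B) x \<Longrightarrow> inP k B x"
  by (simp add: inP_def)

lemma Ex_lip:
  assumes "finite B" "inP k B x" "inP k B x'" "\<And>\<tau>. \<bar>g \<tau>\<bar> \<le> M"
  shows "\<bar>Ex k B g x' - Ex k B g x\<bar> \<le> 2*M*(\<Sum>b\<in>B. \<Sum>j=1..k. \<bar>x' b j - x b j\<bar>)"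
  using assms
proof (induction B arbitrary: g rule: finite_induct)
  case empty
  then show ?case by (simp add: Ex_empty)
next
  case (insert a B)
  define h where "h j = Ex k B (\<lambda>\<tau>. g (\<tau>(a:=j))) x" for j
  define h' where "h' j = Ex k B (\<lambda>\<tau>. g (\<tau>(a:=j))) x'" for j
  define S where "S = (\<Sum>b\<in>B. \<Sum>j=1..k. \<bar>x' b j - x b j\<bar>)"
  have P: "inP k B x" "inP k B x'" using insert.prems inP_insert by blast+
  have IH: "\<bar>h' j - h j\<bar> \<le> 2*M*S" for j
    unfolding h_def h'_def S_def by (rule insert.IH[OF P]) (rule insert.prems)
  have hb: "\<bar>h j\<bar> \<le> M" for j
    unfolding h_def by (rule Ex_bound[OF insert.hyps(1) P(1)]) (rule insert.prems)
  have dec: "Ex k (insert a B) g x' - Ex k (insert a B) g x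
      = (\<Sum>j\<in>{0..k}. pp k x' a j * (h' j - h j)) + (\<Sum>j\<in>{0..k}. (pp k x' a j - pp k x a j) * h j)"
    unfolding Ex_insert[OF insert.hyps] h_def h'_def
    by (simp add: algebra_simps sum_subtractf sum.distrib)
  have "\<bar>\<Sum>j\<in>{0..k}. pp k x' a j * (h' j - h j)\<bar> \<le> (\<Sum>j\<in>{0..k}. pp k x' a j * (2*M*S))"
  proof -
    have "\<bar>\<Sum>j\<in>{0..k}. pp k x' a j * (h' j - h j)\<bar> \<le> (\<Sum>j\<in>{0..k}. \<bar>pp k x' a j * (h' j - h j)\<bar>)"
      by (rule sum_abs)
    also have "\<dots> \<le> (\<Sum>j\<in>{0..k}. pp k x' a j * (2*M*S))"
    proof (rule sum_mono)
      fix j assume j: "j \<in> {0..k}"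
      have "0 \<le> pp k x' a j" using pp_nonneg[OF insert.prems(2) _ j] by simp
      then show "\<bar>pp k x' a j * (h' j - h j)\<bar> \<le> pp k x' a j * (2*M*S)"
        by (simp add: abs_mult IH mult_left_mono)
    qed
    finally show ?thesis .
  qed
  also have "\<dots> = 2*M*S" by (simp add: sum_distrib_right[symmetric] pp_sum)
  finally have t1: "\<bar>\<Sum>j\<in>{0..k}. pp k x' a j * (h' j - h j)\<bar> \<le> 2*M*S" .
  have "\<bar>\<Sum>j\<in>{0..k}. (pp k x' a j - pp k x a j) * h j\<bar> = \<bar>\<Sum>l=1..k. (x' a l - x a l) * (h l - h 0)\<bar>"
    by (simp add: psum_diff)
  also have "\<dots> \<le> (\<Sum>l=1..k. \<bar>(x' a l - x a l) * (h l - h 0)\<bar>)" by (rule sum_abs)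
  also have "\<dots> \<le> (\<Sum>l=1..k. \<bar>x' a l - x a l\<bar> * (2*M))"
  proof (rule sum_mono)
    fix l
    have "\<bar>h l - h 0\<bar> \<le> 2*M" using hb[of l] hb[of 0] by linarith
    then show "\<bar>(x' a l - x a l) * (h l - h 0)\<bar> \<le> \<bar>x' a l - x a l\<bar> * (2*M)"
      by (simp add: abs_mult mult_left_mono)
  qed
  also have "\<dots> = 2*M*(\<Sum>l=1..k. \<bar>x' a l - x a l\<bar>)"
    unfolding sum_distrib_left by (simp add: mult_ac)
  finally have t2: "\<bar>\<Sum>j\<in>{0..k}. (pp k x' a j - pp k x a j) * h j\<bar> \<le> 2*M*(\<Sum>l=1..k. \<bar>x' a l - x a l\<bar>)" .
  have "(\<Sum>b\<in>insert a B. \<Sum>j=1..k. \<bar>x' b j - x b j\<bar>) = (\<Sum>l=1..k. \<bar>x' a l - x a l\<bar>) + S"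
    using insert.hyps by (simp add: S_def)
  then show ?case using dec t1 t2 by (simp add: algebra_simps)
qed

lemma Ex_anti:
  assumes "finite B" "inP k B x" "inP k B x'" "\<forall>i\<in>B. \<forall>j\<in>{1..k}. x i j \<le> x' i j"
    "\<forall>b\<in>B. \<forall>j\<in>{1..k}. \<forall>\<tau>. g (\<tau>(b:=j)) \<le> g (\<tau>(b:=0))"
  shows "Ex k B g x' \<le> Ex k B g x"
  using assms
proof (induction B arbitrary: g rule: finite_induct)
  case empty
  then show ?case by (simp add: Ex_empty)
next
  case (insert a B)
  define h where "h j = Ex k B (\<lambda>\<tau>. g (\<tau>(a:=j))) x" for j
  define h' where "h' j = Ex k B (\<lambda>\<tau>. g (\<tau>(a:=j))) x'" for j
  have P: "inP k B x" "inP k B x'" using insert.prems inP_insert by blast+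
  have IH: "h' j \<le> h j" for j
    unfolding h_def h'_def
  proof (rule insert.IH[OF P])
    show "\<forall>i\<in>B. \<forall>j\<in>{1..k}. x i j \<le> x' i j" using insert.prems by auto
    show "\<forall>b\<in>B. \<forall>ja\<in>{1..k}. \<forall>\<tau>. g (\<tau>(b := ja, a := j)) \<le> g (\<tau>(b := 0, a := j))"
    proof (intro ballI allI)
      fix b j' \<tau> assume b: "b \<in> B" and j': "j' \<in> {1..k}"
      then have ab: "a \<noteq> b" using insert.hyps by auto
      have "g ((\<tau>(a:=j))(b:=j')) \<le> g ((\<tau>(a:=j))(b:=0))" using insert.prems(4) b j' by blast
      then show "g (\<tau>(b := j', a := j)) \<le> g (\<tau>(b := 0, a := j))"
        using ab by (simp add: fun_upd_twist)
    qed
  qed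
  have dec: "Ex k (insert a B) g x' - Ex k (insert a B) g x
      = (\<Sum>j\<in>{0..k}. pp k x' a j * (h' j - h j)) + (\<Sum>j\<in>{0..k}. (pp k x' a j - pp k x a j) * h j)"
    unfolding Ex_insert[OF insert.hyps] h_def h'_def
    by (simp add: algebra_simps sum_subtractf sum.distrib)
  have t1: "(\<Sum>j\<in>{0..k}. pp k x' a j * (h' j - h j)) \<le> 0"
    by (intro sum_nonpos mult_nonneg_nonpos) (auto intro: pp_nonneg[OF insert.prems(2)] simp: IH)
  have t2: "(\<Sum>j\<in>{0..k}. (pp k x' a j - pp k x a j) * h j) \<le> 0"
  proof -
    have "h l - h 0 \<le> 0" if l: "l \<in> {1..k}" for l
    proof -
      have "h l - h 0 = Ex k B (\<lambda>\<tau>. g (\<tau>(a:=l)) - g (\<tau>(a:=0))) x"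
        unfolding h_def by (simp add: Ex_diff)
      also have "\<dots> = - Ex k B (\<lambda>\<tau>. g (\<tau>(a:=0)) - g (\<tau>(a:=l))) x"
        by (simp add: Ex_diff)
      also have "\<dots> \<le> 0"
      proof -
        have "\<And>\<tau>. g (\<tau>(a:=l)) \<le> g (\<tau>(a:=0))" using insert.prems(4) l by blast
        then show ?thesis using Ex_nonneg[OF P(1), of "\<lambda>\<tau>. g (\<tau>(a:=0)) - g (\<tau>(a:=l))"] by auto
      qed
      finally show ?thesis .
    qed
    then show ?thesis unfolding psum_diff
      by (intro sum_nonpos mult_nonneg_nonpos) (use insert.prems(3) in auto)
  qed
  show ?case using dec t1 t2 by linarith
qed

lemma Ex_indicator:
  assumes "finite B" "\<forall>i\<in>B. \<sigma> i \<in> {0..k}" "\<forall>i\<in>B. \<forall>j\<in>{1..k}. x i j = (if \<sigma> i = j then 1 else 0)"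
  shows "Ex k B g x = g (restrict \<sigma> B)"
  using assms
proof (induction B arbitrary: g rule: finite_induct)
  case empty
  then show ?case by (simp add: Ex_empty restrict_def)
next
  case (insert a B)
  have IH: "Ex k B (\<lambda>\<tau>. g (\<tau>(a:=j))) x = g ((restrict \<sigma> B)(a:=j))" for j
    using insert.IH[of "\<lambda>\<tau>. g (\<tau>(a:=j))"] insert.prems by (auto simp: restrict_def)
  have pa: "pp k x a j = (if j = \<sigma> a then 1 else 0)" if "j \<in> {0..k}" for j
  proof (cases "j = 0")
    case True
    have "(\<Sum>l=1..k. x a l) = (\<Sum>l=1..k. if \<sigma> a = l then 1 else 0)"
      using insert.prems by (intro sum.cong) auto
    also have "\<dots> = (if \<sigma> a \<in> {1..k} then 1 else 0)" by (simp add: sum.delta)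
    finally show ?thesis using True insert.prems by (auto simp: pp_def)
  next
    case False
    then show ?thesis using insert.prems that by (auto simp: pp_def)
  qed
  have "Ex k (insert a B) g x = (\<Sum>j\<in>{0..k}. (if j = \<sigma> a then g ((restrict \<sigma> B)(a:=j)) else 0))"
    unfolding Ex_insert[OF insert.hyps] IH by (intro sum.cong) (auto simp: pa)
  also have "\<dots> = g ((restrict \<sigma> B)(a:=\<sigma> a))"
    using insert.prems by (simp add: sum.delta')
  also have "(restrict \<sigma> B)(a:=\<sigma> a) = restrict \<sigma> (insert a B)"
    by (auto simp: restrict_def)
  finally show ?case .
qed



definition tup :: "nat \<Rightarrow> nat \<Rightarrow> (nat \<Rightarrow> nat) \<Rightarrow> (nat \<Rightarrow> nat set)" where
  "tup n k \<tau> = (\<lambda>l. if l \<in> {1..k} then {i\<in>{1..n}. \<tau> i = l} else {})"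

definition sig :: "nat \<Rightarrow> nat \<Rightarrow> (nat \<Rightarrow> nat set) \<Rightarrow> (nat \<Rightarrow> nat)" where
  "sig n k S = (\<lambda>i. if i \<in> {1..n} then (if \<exists>l\<in>{1..k}. i \<in> S l then (SOME l. l\<in>{1..k} \<and> i \<in> S l) else 0) else undefined)"

lemma tup_in: "tup n k \<tau> \<in> ktuples n k"
  by (auto simp: tup_def ktuples_def)

lemma sig_tup: "\<tau> \<in> Pi\<^sub>E {1..n} (\<lambda>_. {0..k}) \<Longrightarrow> sig n k (tup n k \<tau>) = \<tau>"
proof (rule ext)
  fix i assume t: "\<tau> \<in> Pi\<^sub>E {1..n} (\<lambda>_. {0..k})"
  show "sig n k (tup n k \<tau>) i = \<tau> i"
  proof (cases "i \<in> {1..n}")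
    case True
    show ?thesis
    proof (cases "\<tau> i = 0")
      case True
      then show ?thesis using \<open>i \<in> {1..n}\<close> by (auto simp: sig_def tup_def)
    next
      case False
      then have ex: "\<exists>l\<in>{1..k}. i \<in> tup n k \<tau> l" using t True by (auto simp: tup_def PiE_def Pi_def)
      have "(SOME l. l\<in>{1..k} \<and> i \<in> tup n k \<tau> l) = \<tau> i"
        using ex by (rule_tac someI2_ex) (auto simp: tup_def split: if_splits)
      then show ?thesis using ex True by (simp add: sig_def)
    qed
  next
    case False
    have "\<tau> i = undefined" using t False by (auto simp: PiE_def extensional_def)
    then show ?thesis using False by (auto simp: sig_def)
  qed
qed

lemma sig_in: "sig n k S \<in> Pi\<^sub>E {1..n} (\<lambda>_. {0..k})"
proof -
  have "(SOME l. l\<in>{1..k} \<and> i \<in> S l) \<in> {0..k}" if "\<exists>l\<in>{1..k}. i \<in> S l" for i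
    using that by (rule_tac someI2_ex) auto
  then show ?thesis by (auto simp: sig_def PiE_def Pi_def extensional_def)
qed

lemma tup_sig: "S \<in> ktuples n k \<Longrightarrow> tup n k (sig n k S) = S"
proof (rule ext)
  fix l assume S: "S \<in> ktuples n k"
  show "tup n k (sig n k S) l = S l"
  proof (cases "l \<in> {1..k}")
    case False
    then show ?thesis using S by (auto simp: tup_def ktuples_def)
  next
    case True
    have "i \<in> S l \<longleftrightarrow> i \<in> {1..n} \<and> sig n k S i = l" for i
    proof
      assume i: "i \<in> S l"
      then have iN: "i \<in> {1..n}" using S True unfolding ktuples_def by blast
      have ex: "\<exists>l\<in>{1..k}. i \<in> S l" using i True by auto
      have "(SOME l. l\<in>{1..k} \<and> i \<in> S l) = l"
        using ex apply (rule_tac someI2_ex) apply auto[1]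
        using S True i unfolding ktuples_def by blast
      then show "i \<in> {1..n} \<and> sig n k S i = l" using iN ex by (simp add: sig_def)
    next
      assume "i \<in> {1..n} \<and> sig n k S i = l"
      then have iN: "i \<in> {1..n}" and e: "sig n k S i = l" by auto
      have ex: "\<exists>l\<in>{1..k}. i \<in> S l"
        using e iN True by (auto simp: sig_def split: if_splits)
      then have "(SOME l. l\<in>{1..k} \<and> i \<in> S l) = l" using e iN by (simp add: sig_def)
      then show "i \<in> S l" using ex by (metis (mono_tags, lifting) someI_ex)
    qed
    then show ?thesis using True by (auto simp: tup_def)
  qed
qed

lemma ktuples_image: "ktuples n k = tup n k ` Pi\<^sub>E {1..n} (\<lambda>_. {0..k})"
  using tup_in tup_sig sig_in by (metis (no_types, lifting) image_eqI subsetI image_subsetI subset_antisym)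

lemma finite_ktuples: "finite (ktuples n k)"
  unfolding ktuples_image by (intro finite_imageI finite_PiE) auto

lemma weight_eq:
  assumes t: "\<tau> \<in> Pi\<^sub>E {1..n} (\<lambda>_. {0..k})"
  shows "(\<Prod>j\<in>{1..k}. \<Prod>i\<in>tup n k \<tau> j. x i j) * (\<Prod>i\<in>{1..n} - (\<Union>j\<in>{1..k}. tup n k \<tau> j). 1 - (\<Sum>j=1..k. x i j))
       = (\<Prod>i\<in>{1..n}. pp k x i (\<tau> i))"
proof -
  have U: "{1..n} - (\<Union>j\<in>{1..k}. tup n k \<tau> j) = {i\<in>{1..n}. \<tau> i = 0}"
    using t by (force simp: tup_def PiE_def Pi_def)
  have G: "(\<Prod>j\<in>{1..k}. \<Prod>i\<in>tup n k \<tau> j. x i j) = (\<Prod>i\<in>{i\<in>{1..n}. \<tau> i \<noteq> 0}. x i (\<tau> i))"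
  proof -
    have "(\<Prod>i\<in>{i\<in>{1..n}. \<tau> i \<noteq> 0}. x i (\<tau> i)) =
       (\<Prod>j\<in>{1..k}. \<Prod>i\<in>{i. i \<in> {i\<in>{1..n}. \<tau> i \<noteq> 0} \<and> \<tau> i = j}. x i (\<tau> i))"
      using t by (intro prod.group[symmetric]) (auto simp: PiE_def Pi_def)
    also have "\<dots> = (\<Prod>j\<in>{1..k}. \<Prod>i\<in>tup n k \<tau> j. x i j)"
      by (intro prod.cong) (auto simp: tup_def)
    finally show ?thesis by simp
  qed
  have "(\<Prod>i\<in>{1..n}. pp k x i (\<tau> i)) = (\<Prod>i\<in>{i\<in>{1..n}. \<tau> i \<noteq> 0}. pp k x i (\<tau> i)) * (\<Prod>i\<in>{i\<in>{1..n}. \<tau> i = 0}. pp k x i (\<tau> i))"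
    by (subst prod.union_disjoint[symmetric]) (auto intro: prod.cong)
  also have "\<dots> = (\<Prod>i\<in>{i\<in>{1..n}. \<tau> i \<noteq> 0}. x i (\<tau> i)) * (\<Prod>i\<in>{i\<in>{1..n}. \<tau> i = 0}. 1 - (\<Sum>j=1..k. x i j))"
    by (intro arg_cong2[where f="(*)"] prod.cong) (auto simp: pp_def)
  finally show ?thesis using G U by simp
qed

lemma F_eq: "multilinear_ext n k f x = Ex k {1..n} (\<lambda>\<tau>. f (tup n k \<tau>)) x"
  unfolding multilinear_ext_def Ex_def
proof (rule sum.reindex_bij_witness[symmetric, where i="sig n k" and j="tup n k"])
  fix \<tau> assume t: "\<tau> \<in> Pi\<^sub>E {1..n} (\<lambda>_. {0..k})"
  show "sig n k (tup n k \<tau>) = \<tau>" using sig_tup[OF t] .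
  show "tup n k \<tau> \<in> ktuples n k" by (rule tup_in)
  show "f (tup n k \<tau>) * (\<Prod>j\<in>{1..k}. \<Prod>i\<in>tup n k \<tau> j. x i j) *
        (\<Prod>i\<in>{1..n} - (\<Union>j\<in>{1..k}. tup n k \<tau> j). 1 - (\<Sum>j=1..k. x i j)) =
        f (tup n k \<tau>) * (\<Prod>i\<in>{1..n}. pp k x i (\<tau> i))"
    using weight_eq[OF t] by (simp add: mult.assoc)
next
  fix S assume S: "S \<in> ktuples n k"
  show "tup n k (sig n k S) = S" by (rule tup_sig[OF S])
  show "sig n k S \<in> Pi\<^sub>E {1..n} (\<lambda>_. {0..k})" by (rule sig_in)
qed



definition GG :: "nat \<Rightarrow> nat \<Rightarrow> ((nat \<Rightarrow> nat set) \<Rightarrow> real) \<Rightarrow> (nat \<Rightarrow> nat) \<Rightarrow> real" where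
  "GG n k f \<tau> = f (tup n k \<tau>)"

definition Dd :: "nat \<Rightarrow> nat \<Rightarrow> ((nat \<Rightarrow> nat set) \<Rightarrow> real) \<Rightarrow> (nat \<Rightarrow> nat \<Rightarrow> real) \<Rightarrow> nat \<Rightarrow> nat \<Rightarrow> real" where
  "Dd n k f x a j = Ex k ({1..n}-{a}) (\<lambda>\<tau>. GG n k f (\<tau>(a:=j)) - GG n k f (\<tau>(a:=0))) x"

lemma F_row:
  assumes "a \<in> {1..n}"
  shows "multilinear_ext n k f x = (\<Sum>j\<in>{0..k}. pp k x a j * Ex k ({1..n}-{a}) (\<lambda>\<tau>. GG n k f (\<tau>(a:=j))) x)"
proof -
  have I: "{1..n} = insert a ({1..n}-{a})" using assms by auto
  show ?thesis unfolding F_eq GG_def by (subst I, subst Ex_insert) auto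
qed

lemma F_affine:
  assumes a: "a \<in> {1..n}" and zw: "\<forall>i\<in>{1..n}-{a}. \<forall>j\<in>{1..k}. z i j = w i j"
  shows "multilinear_ext n k f z - multilinear_ext n k f w = (\<Sum>j=1..k. (z a j - w a j) * Dd n k f w a j)"
proof -
  define E where "E j = Ex k ({1..n}-{a}) (\<lambda>\<tau>. GG n k f (\<tau>(a:=j))) w" for j
  have Ez: "Ex k ({1..n}-{a}) (\<lambda>\<tau>. GG n k f (\<tau>(a:=j))) z = E j" for j
    unfolding E_def by (rule Ex_cong) (use zw in auto)
  have "multilinear_ext n k f z - multilinear_ext n k f w = (\<Sum>j\<in>{0..k}. (pp k z a j - pp k w a j) * E j)"
    unfolding F_row[OF a, where f=f and x=z] F_row[OF a, where f=f and x=w] Ez E_def[symmetric]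
    by (simp add: sum_subtractf left_diff_distrib)
  also have "\<dots> = (\<Sum>l=1..k. (z a l - w a l) * (E l - E 0))" by (rule psum_diff)
  also have "\<dots> = (\<Sum>j=1..k. (z a j - w a j) * Dd n k f w a j)"
    unfolding E_def Dd_def Ex_diff ..
  finally show ?thesis .
qed

lemma partial_eq:
  assumes a: "a \<in> {1..n}" and j: "j \<in> {1..k}"
  shows "partial_ij (multilinear_ext n k f) x a j = Dd n k f x a j"
proof -
  have eq: "(\<lambda>h. multilinear_ext n k f (x(a := (x a)(j := h)))) =
        (\<lambda>h. multilinear_ext n k f x + (h - x a j) * Dd n k f x a j)"
  proof
    fix h
    have "multilinear_ext n k f (x(a := (x a)(j := h))) - multilinear_ext n k f x
        = (\<Sum>l=1..k. ((x(a := (x a)(j := h))) a l - x a l) * Dd n k f x a l)"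
      by (rule F_affine[OF a]) auto
    also have "\<dots> = (\<Sum>l=1..k. (if l = j then (h - x a j) * Dd n k f x a j else 0))"
      by (intro sum.cong) auto
    also have "\<dots> = (h - x a j) * Dd n k f x a j" using j by (simp add: sum.delta')
    finally show "multilinear_ext n k f (x(a := (x a)(j := h))) = multilinear_ext n k f x + (h - x a j) * Dd n k f x a j"
      by simp
  qed
  have "((\<lambda>h. multilinear_ext n k f x + (h - x a j) * Dd n k f x a j) has_real_derivative Dd n k f x a j) (at (x a j))"
    by (auto intro!: derivative_eq_intros)
  then show ?thesis unfolding partial_ij_def eq by (rule DERIV_imp_deriv)
qed

lemma inP_subset: "inP k A x \<Longrightarrow> B \<subseteq> A \<Longrightarrow> inP k B x"
  by (auto simp: inP_def)

lemma Dd_nonneg: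
  assumes "k_monotone n k f" "inP k {1..n} x" "j \<in> {1..k}"
  shows "0 \<le> Dd n k f x a j"
  unfolding Dd_def
proof (rule Ex_nonneg)
  show "inP k ({1..n} - {a}) x" using assms(2) by (rule inP_subset) auto
  fix \<tau>
  have "kpreceq k (tup n k (\<tau>(a:=0))) (tup n k (\<tau>(a:=j)))"
    using assms(3) by (auto simp: kpreceq_def tup_def)
  then show "0 \<le> GG n k f (\<tau>(a:=j)) - GG n k f (\<tau>(a:=0))"
    using assms(1) tup_in by (auto simp: k_monotone_def GG_def)
qed

lemma sub_key:
  assumes sub: "k_submodular n k f" and ab: "a \<noteq> b" and j: "j \<in> {1..k}" and j': "j' \<in> {1..k}"
  shows "GG n k f (\<sigma>(a:=j, b:=j')) + GG n k f (\<sigma>(a:=0, b:=0)) \<le> GG n k f (\<sigma>(a:=j, b:=0)) + GG n k f (\<sigma>(a:=0, b:=j'))"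
proof -
  define s0 where "s0 = \<sigma>(a:=0, b:=0)"
  have e1: "\<sigma>(a:=j, b:=0) = s0(a:=j)" using ab unfolding s0_def by (auto simp: fun_eq_iff)
  have e2: "\<sigma>(a:=0, b:=j') = s0(b:=j')" unfolding s0_def by (auto simp: fun_eq_iff)
  have e3: "\<sigma>(a:=j, b:=j') = s0(a:=j, b:=j')" unfolding s0_def by (auto simp: fun_eq_iff)
  have s0a: "s0 a = 0" "s0 b = 0" using ab unfolding s0_def by auto
  have m: "kmeet (tup n k (s0(a:=j))) (tup n k (s0(b:=j'))) = tup n k s0"
    using s0a ab j j' by (auto simp: kmeet_def tup_def fun_eq_iff)
  have jn: "kjoin k (tup n k (s0(a:=j))) (tup n k (s0(b:=j'))) = tup n k (s0(a:=j, b:=j'))"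
  proof (rule ext)
    fix l
    show "kjoin k (tup n k (s0(a:=j))) (tup n k (s0(b:=j'))) l = tup n k (s0(a:=j, b:=j')) l"
    proof (cases "l \<in> {1..k}")
      case False then show ?thesis by (auto simp: kjoin_def tup_def)
    next
      case True
      show ?thesis
      proof (rule set_eqI)
        fix i
        show "i \<in> kjoin k (tup n k (s0(a:=j))) (tup n k (s0(b:=j'))) l \<longleftrightarrow> i \<in> tup n k (s0(a:=j, b:=j')) l"
          using True j j' s0a ab by (cases "i = a"; cases "i = b") (auto simp: kjoin_def tup_def)
      qed
    qed
  qed
  have "f (tup n k (s0(a:=j))) + f (tup n k (s0(b:=j'))) \<ge>
        f (kmeet (tup n k (s0(a:=j))) (tup n k (s0(b:=j')))) + f (kjoin k (tup n k (s0(a:=j))) (tup n k (s0(b:=j'))))"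
    using sub tup_in unfolding k_submodular_def by blast
  then show ?thesis unfolding GG_def e1 e2 e3 s0_def[symmetric] m jn by simp
qed

lemma Dd_anti:
  assumes sub: "k_submodular n k f" and a: "a \<in> {1..n}" and j: "j \<in> {1..k}"
    and P: "inP k {1..n} x" "inP k {1..n} x'" and le: "\<forall>i\<in>{1..n}. \<forall>j\<in>{1..k}. x i j \<le> x' i j"
  shows "Dd n k f x' a j \<le> Dd n k f x a j"
  unfolding Dd_def
proof (rule Ex_anti)
  show "inP k ({1..n} - {a}) x" "inP k ({1..n} - {a}) x'" using P by (auto intro: inP_subset)
  show "\<forall>i\<in>{1..n} - {a}. \<forall>j\<in>{1..k}. x i j \<le> x' i j" using le by auto
  show "\<forall>b\<in>{1..n} - {a}. \<forall>j'\<in>{1..k}. \<forall>\<tau>. GG n k f (\<tau>(b := j', a := j)) - GG n k f (\<tau>(b := j', a := 0))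
        \<le> GG n k f (\<tau>(b := 0, a := j)) - GG n k f (\<tau>(b := 0, a := 0))"
  proof (intro ballI allI)
    fix b j' and \<tau> :: "nat \<Rightarrow> nat" assume b: "b \<in> {1..n} - {a}" and j': "j' \<in> {1..k}"
    then have ab: "a \<noteq> b" by auto
    have t: "\<tau>(b := u, a := v) = \<tau>(a := v, b := u)" for u v :: nat using ab by (auto simp: fun_eq_iff)
    show "GG n k f (\<tau>(b := j', a := j)) - GG n k f (\<tau>(b := j', a := 0))
        \<le> GG n k f (\<tau>(b := 0, a := j)) - GG n k f (\<tau>(b := 0, a := 0))"
      unfolding t using sub_key[OF sub ab j j', of \<tau>] by linarith
  qed
qed simp



lemma GG_bound:
  assumes "\<forall>S\<in>ktuples n k. f S \<ge> 0"
  shows "\<bar>GG n k f \<tau>\<bar> \<le> OPT n k f"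
proof -
  have t: "tup n k \<tau> \<in> ktuples n k" by (rule tup_in)
  have "f (tup n k \<tau>) \<le> OPT n k f"
    unfolding OPT_def using t finite_ktuples by (intro Max_ge) auto
  then show ?thesis using assms t by (simp add: GG_def)
qed

lemma first_order:
  assumes P: "inP k {1..n} x" "inP k {1..n} x'" and M: "\<And>\<tau>. \<bar>GG n k f \<tau>\<bar> \<le> M"
  shows "\<bar>multilinear_ext n k f x' - multilinear_ext n k f x
          - (\<Sum>a=1..n. \<Sum>j=1..k. (x' a j - x a j) * Dd n k f x a j)\<bar>
         \<le> 4*M*(\<Sum>a=1..n. \<Sum>j=1..k. \<bar>x' a j - x a j\<bar>)^2"
proof -
  define dist where "dist = (\<Sum>a=1..n. \<Sum>j=1..k. \<bar>x' a j - x a j\<bar>)"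
  define mix where "mix A = (\<lambda>i. if i \<in> A then x' i else x i)" for A
  have M0: "0 \<le> M" using M[of undefined] by simp
  have d0: "0 \<le> dist" unfolding dist_def by (intro sum_nonneg) auto
  have mixP: "inP k B (mix A)" if "B \<subseteq> {1..n}" for A B
    using P that unfolding inP_def mix_def by auto
  have claim: "\<bar>multilinear_ext n k f (mix A) - multilinear_ext n k f x
          - (\<Sum>a\<in>A. \<Sum>j=1..k. (x' a j - x a j) * Dd n k f x a j)\<bar>
         \<le> 4*M*(\<Sum>a\<in>A. \<Sum>j=1..k. \<bar>x' a j - x a j\<bar>) * dist" if "A \<subseteq> {1..n}" for A
  proof -
    have "finite A" using that finite_subset by blast
    then show ?thesis using that
    proof (induction A rule: finite_subset_induct)
      case empty
      have "mix {} = x" by (simp add: mix_def)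
      then show ?case by simp
    next
      case (insert a A)
      have aff: "multilinear_ext n k f (mix (insert a A)) - multilinear_ext n k f (mix A)
           = (\<Sum>j=1..k. (x' a j - x a j) * Dd n k f (mix A) a j)"
      proof -
        have "multilinear_ext n k f (mix (insert a A)) - multilinear_ext n k f (mix A)
           = (\<Sum>j=1..k. (mix (insert a A) a j - mix A a j) * Dd n k f (mix A) a j)"
          by (rule F_affine[OF insert.hyps(2)]) (auto simp: mix_def)
        then show ?thesis using insert.hyps by (simp add: mix_def)
      qed
      have Dclose: "\<bar>Dd n k f (mix A) a j - Dd n k f x a j\<bar> \<le> 4*M*dist" for j
      proof -
        have "\<bar>Dd n k f (mix A) a j - Dd n k f x a j\<bar> \<le> 2*(2*M)*(\<Sum>b\<in>{1..n}-{a}. \<Sum>l=1..k. \<bar>mix A b l - x b l\<bar>)"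
          unfolding Dd_def
        proof (rule Ex_lip)
          show "inP k ({1..n} - {a}) x" using P(1) by (rule inP_subset) auto
          show "inP k ({1..n} - {a}) (mix A)" by (rule mixP) auto
          fix \<tau>
          show "\<bar>GG n k f (\<tau>(a := j)) - GG n k f (\<tau>(a := 0))\<bar> \<le> 2 * M"
            using M[of "\<tau>(a := j)"] M[of "\<tau>(a := 0)"] by linarith
        qed simp
        also have "(\<Sum>b\<in>{1..n}-{a}. \<Sum>l=1..k. \<bar>mix A b l - x b l\<bar>) \<le> (\<Sum>b\<in>{1..n}. \<Sum>l=1..k. \<bar>mix A b l - x b l\<bar>)"
          by (intro sum_mono2) (auto intro: sum_nonneg)
        also have "\<dots> \<le> dist" unfolding dist_def
          by (intro sum_mono) (auto simp: mix_def)
        finally show ?thesis using M0 by (simp add: mult_left_mono)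
      qed
      have "\<bar>(\<Sum>j=1..k. (x' a j - x a j) * Dd n k f (mix A) a j) - (\<Sum>j=1..k. (x' a j - x a j) * Dd n k f x a j)\<bar>
          = \<bar>\<Sum>j=1..k. (x' a j - x a j) * (Dd n k f (mix A) a j - Dd n k f x a j)\<bar>"
        by (simp add: sum_subtractf right_diff_distrib)
      also have "\<dots> \<le> (\<Sum>j=1..k. \<bar>(x' a j - x a j) * (Dd n k f (mix A) a j - Dd n k f x a j)\<bar>)"
        by (rule sum_abs)
      also have "\<dots> \<le> (\<Sum>j=1..k. \<bar>x' a j - x a j\<bar> * (4*M*dist))"
        by (intro sum_mono) (simp add: abs_mult Dclose mult_left_mono)
      also have "\<dots> = 4*M*(\<Sum>j=1..k. \<bar>x' a j - x a j\<bar>) * dist"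
        unfolding sum_distrib_right[symmetric] by (simp add: mult_ac)
      finally have step: "\<bar>(\<Sum>j=1..k. (x' a j - x a j) * Dd n k f (mix A) a j) - (\<Sum>j=1..k. (x' a j - x a j) * Dd n k f x a j)\<bar>
          \<le> 4*M*(\<Sum>j=1..k. \<bar>x' a j - x a j\<bar>) * dist" .
      have s1: "(\<Sum>b\<in>insert a A. \<Sum>j=1..k. (x' b j - x b j) * Dd n k f x b j)
          = (\<Sum>j=1..k. (x' a j - x a j) * Dd n k f x a j) + (\<Sum>b\<in>A. \<Sum>j=1..k. (x' b j - x b j) * Dd n k f x b j)"
        using insert.hyps by simp
      have s2: "4*M*(\<Sum>b\<in>insert a A. \<Sum>j=1..k. \<bar>x' b j - x b j\<bar>) * dist
          = 4*M*(\<Sum>j=1..k. \<bar>x' a j - x a j\<bar>) * dist + 4*M*(\<Sum>b\<in>A. \<Sum>j=1..k. \<bar>x' b j - x b j\<bar>) * dist"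
        using insert.hyps by (simp add: algebra_simps)
      show ?case using insert.IH aff step s1 s2 by (simp only:)
    qed
  qed
  have "multilinear_ext n k f (mix {1..n}) = multilinear_ext n k f x'"
    unfolding F_eq by (rule Ex_cong) (auto simp: mix_def)
  then have "\<bar>multilinear_ext n k f x' - multilinear_ext n k f x
          - (\<Sum>a=1..n. \<Sum>j=1..k. (x' a j - x a j) * Dd n k f x a j)\<bar> \<le> 4*M*dist*dist"
    using claim[of "{1..n}"] by (simp add: dist_def)
  then show ?thesis by (simp add: dist_def power2_eq_square mult_ac)
qed



lemma traj_Suc: "traj N v (Suc t) i j = traj N v t i j + (1 / real N) * v t i j"
  by (simp add: traj_def)

lemma traj_0: "traj N v 0 = (\<lambda>i j. 0)"
  by (simp add: traj_def fun_eq_iff)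

theorem mainTheorem5:
  fixes n k :: nat and f :: "(nat \<Rightarrow> nat set) \<Rightarrow> real" and c :: real
  assumes "k \<ge> 2"
    and "\<forall>S\<in>ktuples n k. f S \<ge> 0"
    and "k_monotone n k f"
    and "k_submodular n k f"
    and "c > 0"
  shows "\<forall>\<epsilon>>0. \<exists>N0::nat. \<forall>N\<ge>N0. \<forall>v :: nat \<Rightarrow> nat \<Rightarrow> nat \<Rightarrow> real.
           (\<forall>t<N. valid_direction n k (v t) \<and>
              c_condition n k c (v t) (partial_ij (multilinear_ext n k f) (traj N v t))) \<longrightarrow>
           multilinear_ext n k f (traj N v N) \<ge> OPT n k f / (c + 1) - \<epsilon>"
proof (intro allI impI)
  fix \<epsilon> :: real assume eps: "\<epsilon> > 0"
  define M where "M = OPT n k f"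
  define F where "F = multilinear_ext n k f"
  have Mb: "\<And>\<tau>. \<bar>GG n k f \<tau>\<bar> \<le> M" unfolding M_def by (rule GG_bound[OF assms(2)])
  have M0: "0 \<le> M" using Mb[of undefined] by simp
  define C where "C = 4*M*(real n)^2*c + 16*M*(real n)^2"
  have C0: "0 \<le> C" unfolding C_def using M0 assms(5) by simp
  obtain Sopt where Sopt: "Sopt \<in> ktuples n k" "f Sopt = M"
    unfolding M_def OPT_def using finite_ktuples tup_in
    by (metis (no_types, lifting) Max_in empty_iff finite_imageI image_iff image_is_empty)
  define opt where "opt i = (if sig n k Sopt i = 0 then 1 else sig n k Sopt i)" for i
  have o_in: "opt i \<in> {1..k}" if "i \<in> {1..n}" for i
    using sig_in[of n k Sopt] that assms(1) by (auto simp: opt_def PiE_def Pi_def)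
  have fo: "f (tup n k opt) = M"
  proof -
    have "kpreceq k Sopt (tup n k opt)"
    proof -
      have "Sopt l \<subseteq> tup n k opt l" if "l \<in> {1..k}" for l
      proof -
        have "Sopt l = tup n k (sig n k Sopt) l" using tup_sig[OF Sopt(1)] by simp
        then show ?thesis using that by (auto simp: tup_def opt_def)
      qed
      then show ?thesis by (simp add: kpreceq_def)
    qed
    then have "f Sopt \<le> f (tup n k opt)" using assms(3) Sopt(1) tup_in by (auto simp: k_monotone_def)
    moreover have "f (tup n k opt) \<le> M" using Mb[of opt] by (simp add: GG_def)
    ultimately show ?thesis using Sopt by simp
  qed
  define N0 :: nat where "N0 = nat \<lceil>C / \<epsilon>\<rceil> + 1"
  show "\<exists>N0::nat. \<forall>N\<ge>N0. \<forall>v :: nat \<Rightarrow> nat \<Rightarrow> nat \<Rightarrow> real.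
           (\<forall>t<N. valid_direction n k (v t) \<and>
              c_condition n k c (v t) (partial_ij (multilinear_ext n k f) (traj N v t))) \<longrightarrow>
           multilinear_ext n k f (traj N v N) \<ge> OPT n k f / (c + 1) - \<epsilon>"
  proof (intro exI allI impI)
    fix N :: nat and v :: "nat \<Rightarrow> nat \<Rightarrow> nat \<Rightarrow> real"
    assume N: "N0 \<le> N"
    assume H: "\<forall>t<N. valid_direction n k (v t) \<and>
              c_condition n k c (v t) (partial_ij (multilinear_ext n k f) (traj N v t))"
    have N1: "1 \<le> N" using N by (simp add: N0_def)
    have NC: "C / \<epsilon> < real N"
      using N unfolding N0_def by linarith
    then have CN: "C / real N \<le> \<epsilon>"
      using eps N1 by (simp add: field_simps)
    define \<delta> where "\<delta> = 1 / real N"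
    have \<delta>0: "0 < \<delta>" using N1 by (simp add: \<delta>_def)
    define x where "x t = traj N v t" for t
    have vnn: "0 \<le> v t i j" "v t i j \<le> 1" if "t < N" "i \<in> {1..n}" "j \<in> {1..k}" for t i j
      using H that by (auto simp: valid_direction_def)
    have vsum: "(\<Sum>j=1..k. v t i j) = 1" if "t < N" "i \<in> {1..n}" for t i
      using H that by (auto simp: valid_direction_def)
    have xS: "x (Suc t) i j = x t i j + \<delta> * v t i j" for t i j
      by (simp add: x_def \<delta>_def traj_Suc)
    have xnn: "0 \<le> x t i j" if "t \<le> N" "i \<in> {1..n}" "j \<in> {1..k}" for t i j
      using that unfolding x_def traj_def by (intro sum_nonneg) (auto intro!: vnn divide_nonneg_nonneg)
    have xrow: "(\<Sum>j=1..k. x t i j) = real t / real N" if "t \<le> N" "i \<in> {1..n}" for t i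
      using that
    proof (induction t)
      case 0 then show ?case by (simp add: x_def traj_0)
    next
      case (Suc t)
      have "(\<Sum>j=1..k. x (Suc t) i j) = (\<Sum>j=1..k. x t i j) + \<delta> * (\<Sum>j=1..k. v t i j)"
        by (simp add: xS sum.distrib sum_distrib_left)
      also have "\<dots> = real t / real N + \<delta>" using Suc vsum[of t i] by simp
      finally show ?case by (simp add: \<delta>_def add_divide_distrib)
    qed
    have xP: "inP k {1..n} (x t)" if "t \<le> N" for t
      unfolding inP_def using that xnn xrow N1 by (auto simp: divide_le_eq_1)
    define q where "q t = (\<lambda>i j. x t i j + (1 - real t / real N) * (if j = opt i then 1 else 0))" for t
    have qnn: "1 - real t / real N \<ge> 0" if "t \<le> N" for t using that N1 by (simp add: field_simps)
    have qP: "inP k {1..n} (q t)" if "t \<le> N" for t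
    proof -
      have "(\<Sum>j=1..k. q t i j) = 1" if "i \<in> {1..n}" for i
      proof -
        have "(\<Sum>j=1..k. q t i j) = (\<Sum>j=1..k. x t i j) + (1 - real t / real N) * (\<Sum>j=1..k. if j = opt i then 1 else 0)"
          by (simp only: q_def sum.distrib sum_distrib_left[symmetric])
        also have "(\<Sum>j=1..k. if j = opt i then 1 else (0::real)) = 1" using o_in[OF that] by (simp add: sum.delta')
        finally show ?thesis using xrow[OF \<open>t \<le> N\<close> that] by simp
      qed
      then show ?thesis unfolding inP_def q_def using xnn[OF that] qnn[OF that] by auto
    qed
    have Fq0: "F (q 0) = M"
    proof -
      have "F (q 0) = GG n k f (restrict opt {1..n})"
        unfolding F_def F_eq GG_def[symmetric]
      proof (rule Ex_indicator)
        show "\<forall>i\<in>{1..n}. opt i \<in> {0..k}" using o_in by fastforce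
      qed (auto simp: q_def x_def traj_0)
      also have "tup n k (restrict opt {1..n}) = tup n k opt" by (auto simp: tup_def fun_eq_iff)
      then have "GG n k f (restrict opt {1..n}) = M" using fo by (simp add: GG_def)
      finally show ?thesis .
    qed
    have FqN: "F (q N) = F (x N)"
      unfolding F_def F_eq by (rule Ex_cong) (use N1 in \<open>simp add: q_def\<close>)
    have Fx0: "0 \<le> F (x 0)"
      unfolding F_def F_eq using xP[of 0] assms(2) tup_in by (intro Ex_nonneg) auto
    have step: "F (q t) - F (q (Suc t)) \<le> c * (F (x (Suc t)) - F (x t)) + C * \<delta>^2" if t: "t < N" for t
    proof -
      define y where "y i j = Dd n k f (x t) i j" for i j
      define a where "a i j = Dd n k f (q (Suc t)) i j" for i j
      define S1 where "S1 = (\<Sum>i=1..n. \<Sum>j=1..k. v t i j * y i j)"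
      define S2 where "S2 = (\<Sum>i=1..n. \<Sum>j=1..k. v t i j * (a i (opt i) - a i j))"
      have A: "F (x (Suc t)) - F (x t) \<ge> \<delta> * S1 - 4*M*(real n * \<delta>)^2"
      proof -
        have t1: "Suc t \<le> N" "t \<le> N" using t by auto
        note fo1 = first_order[OF xP[OF t1(2)] xP[OF t1(1)] Mb]
        have d: "(\<Sum>a=1..n. \<Sum>j=1..k. \<bar>x (Suc t) a j - x t a j\<bar>) = real n * \<delta>"
        proof -
          have "(\<Sum>a=1..n. \<Sum>j=1..k. \<bar>x (Suc t) a j - x t a j\<bar>) = (\<Sum>a=1..n. \<delta> * (\<Sum>j=1..k. v t a j))"
            using \<delta>0 by (intro sum.cong refl) (auto simp: xS sum_distrib_left abs_mult vnn[OF t])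
          also have "\<dots> = (\<Sum>a=1..n. \<delta>)" using vsum[OF t] by simp
          finally show ?thesis by simp
        qed
        have l: "(\<Sum>a=1..n. \<Sum>j=1..k. (x (Suc t) a j - x t a j) * Dd n k f (x t) a j) = \<delta> * S1"
          unfolding S1_def y_def by (simp add: xS sum_distrib_left mult_ac)
        show ?thesis using fo1 unfolding d l F_def abs_le_iff by linarith
      qed
      have B: "F (q t) - F (q (Suc t)) \<le> \<delta> * S2 + 4*M*(2 * real n * \<delta>)^2"
      proof -
        have t1: "Suc t \<le> N" "t \<le> N" using t by auto
        note fo2 = first_order[OF qP[OF t1(1)] qP[OF t1(2)] Mb]
        have diff: "q t i j - q (Suc t) i j = \<delta> * ((if j = opt i then 1 else 0) - v t i j)" for i j
          using N1 by (simp add: q_def xS \<delta>_def field_simps)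
        have d: "(\<Sum>a=1..n. \<Sum>j=1..k. \<bar>q t a j - q (Suc t) a j\<bar>) \<le> 2 * real n * \<delta>"
        proof -
          have "(\<Sum>a=1..n. \<Sum>j=1..k. \<bar>q t a j - q (Suc t) a j\<bar>) \<le> (\<Sum>a=1..n. 2 * \<delta>)"
          proof (intro sum_mono)
            fix a assume a: "a \<in> {1..n}"
            have "(\<Sum>j=1..k. \<bar>q t a j - q (Suc t) a j\<bar>) \<le> (\<Sum>j=1..k. \<delta> * (if j = opt a then 1 else 0) + \<delta> * v t a j)"
              unfolding diff
            proof (intro sum_mono)
              fix j assume j: "j \<in> {1..k}"
              have "0 \<le> v t a j" using vnn[OF t a j] by simp
              then have "\<bar>(if j = opt a then 1 else 0) - v t a j\<bar> \<le> (if j = opt a then 1 else 0) + v t a j" by auto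
              then show "\<bar>\<delta> * ((if j = opt a then 1 else 0) - v t a j)\<bar> \<le> \<delta> * (if j = opt a then 1 else 0) + \<delta> * v t a j"
                using \<delta>0 by (simp add: abs_mult distrib_left[symmetric] mult_left_mono del: distrib_left)
            qed
            also have "\<dots> = 2 * \<delta>"
              using o_in[OF a] vsum[OF t a] by (simp add: sum.distrib sum_distrib_left[symmetric] sum.delta')
            finally show "(\<Sum>j=1..k. \<bar>q t a j - q (Suc t) a j\<bar>) \<le> 2 * \<delta>" .
          qed
          then show ?thesis by simp
        qed
        have d2: "(\<Sum>a=1..n. \<Sum>j=1..k. \<bar>q t a j - q (Suc t) a j\<bar>)^2 \<le> (2 * real n * \<delta>)^2"
          using d by (intro power_mono) (auto intro: sum_nonneg)
        have l: "(\<Sum>i=1..n. \<Sum>j=1..k. (q t i j - q (Suc t) i j) * Dd n k f (q (Suc t)) i j) = \<delta> * S2"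
        proof -
          have "(\<Sum>j=1..k. (q t i j - q (Suc t) i j) * a i j) = \<delta> * (\<Sum>j=1..k. v t i j * (a i (opt i) - a i j))"
            if i: "i \<in> {1..n}" for i
          proof -
            have "(\<Sum>j=1..k. (q t i j - q (Suc t) i j) * a i j)
                = \<delta> * ((\<Sum>j=1..k. (if j = opt i then a i j else 0)) - (\<Sum>j=1..k. v t i j * a i j))"
            proof -
              have e: "(q t i j - q (Suc t) i j) * a i j = \<delta> * ((if j = opt i then a i j else 0) - v t i j * a i j)" for j
                by (simp add: diff algebra_simps)
              show ?thesis by (simp only: e sum_subtractf[symmetric] sum_distrib_left)
            qed
            also have "(\<Sum>j=1..k. (if j = opt i then a i j else 0)) = a i (opt i)" using o_in[OF i] by (simp add: sum.delta')
            also have "a i (opt i) = (\<Sum>j=1..k. v t i j * a i (opt i))"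
              using vsum[OF t i] by (simp add: sum_distrib_right[symmetric])
            finally show ?thesis by (simp add: sum_subtractf right_diff_distrib)
          qed
          then have "(\<Sum>i=1..n. \<Sum>j=1..k. (q t i j - q (Suc t) i j) * Dd n k f (q (Suc t)) i j)
               = (\<Sum>i=1..n. \<delta> * (\<Sum>j=1..k. v t i j * (a i (opt i) - a i j)))"
            unfolding a_def by (rule sum.cong[OF refl])
          also have "\<dots> = \<delta> * S2" unfolding S2_def by (rule sum_distrib_left[symmetric])
          finally show ?thesis .
        qed
        have "F (q t) - F (q (Suc t)) - \<delta> * S2 \<le> 4*M*(\<Sum>a=1..n. \<Sum>j=1..k. \<bar>q t a j - q (Suc t) a j\<bar>)^2"
          using fo2 unfolding l F_def abs_le_iff by linarith
        also have "\<dots> \<le> 4*M*(2 * real n * \<delta>)^2" using d2 M0 by (simp add: mult_left_mono)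
        finally show ?thesis by simp
      qed
      have Cc: "S2 \<le> c * S1"
      proof -
        have cc: "c_condition n k c (v t) (partial_ij (multilinear_ext n k f) (traj N v t))" using H t by blast
        have pe: "partial_ij (multilinear_ext n k f) (traj N v t) i j = y i j" if "i \<in> {1..n}" "j \<in> {1..k}" for i j
          unfolding y_def x_def by (rule partial_eq[OF that])
        have le: "\<forall>i\<in>{1..n}. \<forall>j\<in>{1..k}. 0 \<le> a i j \<and> a i j \<le> partial_ij (multilinear_ext n k f) (traj N v t) i j"
        proof (intro ballI conjI)
          fix i j assume i: "i \<in> {1..n}" and j: "j \<in> {1..k}"
          show "0 \<le> a i j" unfolding a_def using Dd_nonneg[OF assms(3) qP[of "Suc t"] j] t by simp
          have "Dd n k f (q (Suc t)) i j \<le> Dd n k f (x t) i j"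
          proof (rule Dd_anti[OF assms(4) i j xP qP])
            show "\<forall>i\<in>{1..n}. \<forall>j\<in>{1..k}. x t i j \<le> q (Suc t) i j"
              using \<delta>0 qnn[of "Suc t"] t by (auto simp: q_def xS vnn)
          qed (use t in auto)
          then show "a i j \<le> partial_ij (multilinear_ext n k f) (traj N v t) i j"
            unfolding pe[OF i j] a_def y_def .
        qed
        have "S2 \<le> c * (\<Sum>i=1..n. \<Sum>j=1..k. v t i j * partial_ij (multilinear_ext n k f) (traj N v t) i j)"
          using cc le o_in unfolding c_condition_def S2_def by blast
        also have "(\<Sum>i=1..n. \<Sum>j=1..k. v t i j * partial_ij (multilinear_ext n k f) (traj N v t) i j) = S1"
          unfolding S1_def by (intro sum.cong refl) (simp add: pe)
        finally show ?thesis .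
      qed
      have h1: "\<delta> * S2 \<le> c * \<delta> * S1" using Cc \<delta>0 mult_left_mono[OF Cc, of \<delta>] by (simp add: mult_ac)
      have h2: "c * \<delta> * S1 - c * (4*M*(real n * \<delta>)^2) \<le> c * F (x (Suc t)) - c * F (x t)"
        using mult_left_mono[OF A, of c] assms(5) by (simp add: right_diff_distrib mult_ac)
      have h3: "4*M*(2 * real n * \<delta>)^2 = 16*M*(real n)^2*\<delta>^2" by (simp add: power_mult_distrib)
      have h4: "C * \<delta>^2 = c * (4*M*(real n * \<delta>)^2) + 16*M*(real n)^2*\<delta>^2"
        unfolding C_def by (simp add: power_mult_distrib algebra_simps)
      have h5: "c * (F (x (Suc t)) - F (x t)) = c * F (x (Suc t)) - c * F (x t)" by (simp add: right_diff_distrib)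
      show ?thesis using B h1 h2 h3 h4 h5 by linarith
    qed
    have tel: "F (q 0) - F (q N) \<le> c * (F (x N) - F (x 0)) + real N * (C * \<delta>^2)"
    proof -
      have "F (q 0) - F (q N) = (\<Sum>t<N. F (q t) - F (q (Suc t)))" by (rule sum_lessThan_telescope'[symmetric])
      also have "\<dots> \<le> (\<Sum>t<N. c * (F (x (Suc t)) - F (x t)) + C * \<delta>^2)" by (intro sum_mono step) simp
      also have "\<dots> = c * (F (x N) - F (x 0)) + real N * (C * \<delta>^2)"
        by (simp add: sum.distrib sum_distrib_left[symmetric] sum_lessThan_telescope[where f="\<lambda>t. F (x t)"])
      finally show ?thesis .
    qed
    have "real N * (C * \<delta>^2) = C / real N" using N1 by (simp add: \<delta>_def power2_eq_square)
    then have "M - F (x N) \<le> c * F (x N) + \<epsilon>"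
    proof -
      have "0 \<le> c * F (x 0)" using Fx0 assms(5) by simp
      moreover have "c * (F (x N) - F (x 0)) = c * F (x N) - c * F (x 0)" by (simp add: right_diff_distrib)
      ultimately show ?thesis using tel Fq0 FqN CN \<open>real N * (C * \<delta>^2) = C / real N\<close> by linarith
    qed
    then have "M - \<epsilon> \<le> (c + 1) * F (x N)" by (simp add: algebra_simps)
    then have "(M - \<epsilon>) / (c + 1) \<le> F (x N)" using assms(5) by (simp add: divide_le_eq mult.commute)
    moreover have "M / (c + 1) - \<epsilon> \<le> (M - \<epsilon>) / (c + 1)"
    proof -
      have "\<epsilon> / (c + 1) \<le> \<epsilon>" using eps assms(5) by (simp add: divide_le_eq)
      then show ?thesis by (simp add: diff_divide_distrib)
    qed
    ultimately show "multilinear_ext n k f (traj N v N) \<ge> OPT n k f / (c + 1) - \<epsilon>"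
      unfolding F_def x_def M_def by linarith
  qed
qed

end
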